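(* Let $X$ and $Y$ be real random variables with probability densities $p_X$ and $p_Y$ (with respect to Lebesgue measure on $\mathbb{R}$), and suppose there is a constant $D<\infty$ with $0<p_Y(y)\le D$ for all $y\in\mathbb{R}$. Then for every $A>0$ (writing $\mathcal{A}=[-A,A]$) and every $s>1$, \[ \begin{aligned} \mathrm{KL}(X\|Y)\le\;& (1+|\ln D|)\big[\mathbb{P}(|Y|\ge A)+\|p_X-p_Y\|_1\big]\\ &+\big(\mathbb{E}_X|\ln p_Y(X)|^s\big)^{1/s}\big[\mathbb{P}(|Y|\ge A)+\|p_X-p_Y\|_1\big]^{1-1/s}\\ &+\Big(1+\max_{y\in\mathcal{A}}p_Y(y)^{-1}\Big)\|p_X-p_Y\|_2^2 . \end{aligned} \]
   Context: $\mathrm{KL}(X\|Y)=\int_{\mathbb{R}} p_X(x)\ln\frac{p_X(x)}{p_Y(x)}\,dx$ is the Kullback–Leibler divergence between the laws of $X$ and $Y$. $\|f\|_q$ denotes the $L^q(\mathbb{R})$ norm with respect to Lebesgue measure. $\mathbb{E}_X|\ln p_Y(X)|^s=\int p_X(x)|\ln p_Y(x)|^s\,dx$. *)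

theory Defs
  imports "HOL-Analysis.Analysis"
begin

definition is_density :: "(real \<Rightarrow> real) \<Rightarrow> bool" where
  "is_density p \<longleftrightarrow> p \<in> borel_measurable lborel \<and> (\<forall>x. 0 \<le> p x)
     \<and> (\<integral>\<^sup>+ x. ennreal (p x) \<partial>lborel) = 1"

text \<open>Kullback-Leibler divergence KL(X||Y) of the laws with densities pX, pY,
  as the Lebesgue integral of pX ln(pX/pY) (positive part minus negative part,
  extended-real valued; convention 0 ln 0 = 0).\<close>
definition KL :: "(real \<Rightarrow> real) \<Rightarrow> (real \<Rightarrow> real) \<Rightarrow> ereal" where
  "KL pX pY =
     enn2ereal (\<integral>\<^sup>+ x. ennreal (pX x * ln (pX x / pY x)) \<partial>lborel)
     - enn2ereal (\<integral>\<^sup>+ x. ennreal (- (pX x * ln (pX x / pY x))) \<partial>lborel)"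

definition Lq_pow :: "real \<Rightarrow> (real \<Rightarrow> real) \<Rightarrow> ennreal" where
  "Lq_pow q f = (\<integral>\<^sup>+ x. ennreal (\<bar>f x\<bar> powr q) \<partial>lborel)"

definition enn_powr :: "ennreal \<Rightarrow> real \<Rightarrow> ennreal" where
  "enn_powr x r = (if x = \<infinity> then \<infinity> else ennreal (enn2real x powr r))"

end

theory Submission
  imports Defs "HOL-Analysis.Analysis"
begin
lemma pt_in: fixes p q :: real assumes "p \<ge> 0" "q > 0"
  shows "p*ln(p/q) \<le> (p-q)^2/q + (p - q)"
proof (cases "p = 0")
  case True then show ?thesis using assms by (simp add: power2_eq_square)
next
  case False
  then have "p > 0" using assms by simp
  have "ln (p/q) \<le> p/q - 1" using \<open>p>0\<close> assms by (intro ln_le_minus_one) auto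
  then have "p * ln (p/q) \<le> p * (p/q - 1)" using \<open>p>0\<close> by (intro mult_left_mono) auto
  also have "\<dots> = (p-q)^2/q + (p - q)" using assms by (simp add: field_simps power2_eq_square)
  finally show ?thesis .
qed

lemma pt_neg: fixes p q :: real assumes "p \<ge> 0" "q > 0"
  shows "-(p*ln(p/q)) \<le> q"
proof (cases "p = 0")
  case True then show ?thesis using assms by simp
next
  case False
  then have "p > 0" using assms by simp
  have "ln (q/p) \<le> q/p - 1" using \<open>p>0\<close> assms by (intro ln_le_minus_one) auto
  moreover have "ln (p/q) = - ln (q/p)" using \<open>p>0\<close> assms by (simp add: ln_div)
  ultimately have "-(p * ln (p/q)) \<le> p * (q/p - 1)" using \<open>p>0\<close> by (simp add: mult_left_mono)
  also have "\<dots> = q - p" using \<open>p>0\<close> by (simp add: field_simps)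
  finally show ?thesis using assms by simp
qed

lemma plnp: fixes p q D :: real assumes "p \<ge> 0" "q > 0" "q \<le> D"
  shows "p * ln p \<le> (1+\<bar>ln D\<bar>)*p + (p-q)^2"
proof -
  define M where "M = max D 1"
  have M1: "M \<ge> 1" "M \<ge> D" "ln M \<le> \<bar>ln D\<bar>" using assms by (auto simp: M_def max_def)
  show ?thesis
  proof (cases "p \<le> M")
    case True
    show ?thesis
    proof (cases "p = 0")
      case True then show ?thesis by simp
    next
      case False
      then have "ln p \<le> ln M" using True assms by simp
      then have "p * ln p \<le> p * \<bar>ln D\<bar>" using M1 assms by (meson mult_left_mono order_trans)
      moreover have "0 \<le> (p-q)^2" by simp
      moreover have "(1+\<bar>ln D\<bar>)*p = p + p*\<bar>ln D\<bar>" by (simp add: algebra_simps)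
      ultimately show ?thesis using assms by linarith
    qed
  next
    case False
    define u where "u = p - M"
    have u: "u > 0" "u \<le> p" "u \<le> p - q" using False M1 assms by (auto simp: u_def)
    have "ln (p/M) \<le> p/M - 1" using False M1 by (intro ln_le_minus_one) auto
    moreover have "ln p = ln M + ln (p/M)" using False M1 by (simp add: ln_div)
    moreover have "p * ln (p/M) \<le> p * (p/M - 1)" using assms calculation(1) by (simp add: mult_left_mono)
    ultimately have "p * ln p \<le> p * ln M + p * (p/M - 1)" by (simp add: distrib_left)
    also have "p * (p/M - 1) = u + u^2/M" using M1 by (simp add: u_def field_simps power2_eq_square)
    also have "u^2/M \<le> u^2" using M1 by (simp add: divide_le_eq mult_le_cancel_left1)
    also have "u^2 \<le> (p-q)^2" using u by (simp add: power_mono)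
    finally have "p * ln p \<le> p * ln M + u + (p-q)^2" by simp
    moreover have "p * ln M \<le> p * \<bar>ln D\<bar>" using M1 assms by (intro mult_left_mono) auto
    moreover have "(1+\<bar>ln D\<bar>)*p = p + p*\<bar>ln D\<bar>" by (simp add: algebra_simps)
    ultimately show ?thesis using u by linarith
  qed
qed

lemma pt_out: fixes p q D :: real assumes "p \<ge> 0" "q > 0" "q \<le> D"
  shows "p*ln(p/q) \<le> (1+\<bar>ln D\<bar>)*p + (p-q)^2 + p*\<bar>ln q\<bar>"
proof (cases "p = 0")
  case True then show ?thesis by simp
next
  case False
  then have "p*ln(p/q) = p * ln p - p * ln q" using assms by (simp add: ln_div algebra_simps)
  also have "- p * ln q \<le> p*\<bar>ln q\<bar>" using assms
    by (metis abs_ge_minus_self mult_left_mono mult_minus_left mult_minus_right)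
  then have "p * ln p - p * ln q \<le> p * ln p + p*\<bar>ln q\<bar>" by simp
  finally show ?thesis using plnp[OF assms] by simp
qed

lemma young_pt: fixes u Ir Br s :: real assumes "u \<ge> 0" "Ir > 0" "Br > 0" "s > 1"
  shows "u \<le> Ir powr (1/s) * Br powr (1-1/s) * (u powr s/(s*Ir) + (1-1/s)/Br)"
proof (cases "u = 0")
  case True then show ?thesis using assms by (simp add: divide_simps)
next
  case False
  then have u: "u > 0" using assms by simp
  have "(u powr s/Ir) powr (1/s) * (1/Br) powr (1-1/s) \<le> (1/s)*(u powr s/Ir) + (1-1/s)*(1/Br)"
    using assms u by (intro Youngs_inequality_0) auto
  moreover have "(u powr s/Ir) powr (1/s) * (1/Br) powr (1-1/s) = u / (Ir powr (1/s) * Br powr (1-1/s))"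
    using assms u by (simp add: powr_divide powr_powr powr_divide)
  ultimately have "u / (Ir powr (1/s) * Br powr (1-1/s)) \<le> u powr s/(s*Ir) + (1-1/s)/Br" by simp
  then show ?thesis using assms by (simp add: divide_le_eq mult.commute)
qed

lemma ennreal_key:
  fixes a p q g :: real
  assumes "0 \<le> p" "0 \<le> q" "0 \<le> g" "a \<le> g + p - q"
  shows "ennreal a + ennreal q \<le> ennreal (-a) + ennreal p + ennreal g"
proof (cases "a \<ge> 0")
  case True
  then have "ennreal a + ennreal q = ennreal (a + q)" using assms by (simp add: ennreal_plus)
  also have "\<dots> \<le> ennreal (p + g)" using assms by (intro ennreal_leI) linarith
  also have "\<dots> = ennreal p + ennreal g" using assms by (simp add: ennreal_plus)
  finally show ?thesis using True by (simp add: ennreal_neg)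
next
  case False
  then have "ennreal a = 0" by (simp add: ennreal_neg)
  moreover have "ennreal q \<le> ennreal (-a + p + g)" using assms by (intro ennreal_leI) linarith
  moreover have "ennreal (-a + p) = ennreal (-a) + ennreal p" using False assms by (intro ennreal_plus) auto
  moreover have "ennreal (-a + p + g) = ennreal (-a + p) + ennreal g" using False assms by (intro ennreal_plus) auto
  ultimately show ?thesis by simp
qed

lemma ereal_step:
  fixes P N R :: ennreal
  assumes "P \<le> N + R" "N \<noteq> \<infinity>"
  shows "enn2ereal P - enn2ereal N \<le> enn2ereal R"
proof -
  obtain n where n: "N = ennreal n" "0 \<le> n" using assms(2) by (cases N) auto
  have "enn2ereal P \<le> ereal n + enn2ereal R"
    using assms(1) n by (simp add: less_eq_ennreal.rep_eq plus_ennreal.rep_eq enn2ereal_ennreal)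
  then show ?thesis using n by (simp add: enn2ereal_ennreal ereal_minus_le_iff add.commute)
qed

lemma aux_zero:
  fixes p l s :: real
  assumes "0 \<le> p" "p * (\<bar>l\<bar> powr s) \<le> 0"
  shows "p * \<bar>l\<bar> \<le> 0"
proof -
  have "0 \<le> p * (\<bar>l\<bar> powr s)" using assms by simp
  then have "p * (\<bar>l\<bar> powr s) = 0" using assms by linarith
  then have "p = 0 \<or> l = 0" by (simp add: powr_eq_0_iff)
  then show ?thesis by auto
qed

lemma enn_powr_nz: "x \<noteq> 0 \<Longrightarrow> enn_powr x r \<noteq> 0"
  unfolding enn_powr_def
  by (cases x) (auto simp: ennreal_eq_0_iff powr_eq_0_iff order.order_iff_strict)

lemma enn_powr_top: "enn_powr \<infinity> r = \<infinity>"
  unfolding enn_powr_def by simp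


theorem theorem2p1:
  fixes pX pY :: "real \<Rightarrow> real" and D A s :: real
  assumes "is_density pX" and "is_density pY"
    and "\<forall>y. 0 < pY y \<and> pY y \<le> D"
    and "A > 0" and "s > 1"
  shows "KL pX pY \<le> enn2ereal (
     (let B = (\<integral>\<^sup>+ y. ennreal (pY y) * indicator {y. A \<le> \<bar>y\<bar>} y \<partial>lborel)
              + Lq_pow 1 (\<lambda>x. pX x - pY x)
      in (1 + ennreal \<bar>ln D\<bar>) * B
         + enn_powr (\<integral>\<^sup>+ x. ennreal (pX x * \<bar>ln (pY x)\<bar> powr s) \<partial>lborel) (1 / s)
           * enn_powr B (1 - 1 / s)
         + (1 + (SUP y\<in>{-A..A}. ennreal (1 / pY y))) * Lq_pow 2 (\<lambda>x. pX x - pY x)))"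
proof -
  have mX0: "pX \<in> borel_measurable lborel" and pX0: "\<And>x. 0 \<le> pX x"
    and iX: "(\<integral>\<^sup>+ x. ennreal (pX x) \<partial>lborel) = 1"
    using assms(1) unfolding is_density_def by auto
  have mY0: "pY \<in> borel_measurable lborel" and pY0: "\<And>x. 0 \<le> pY x"
    and iY: "(\<integral>\<^sup>+ x. ennreal (pY x) \<partial>lborel) = 1"
    using assms(2) unfolding is_density_def by auto
  have mX[measurable]: "pX \<in> borel_measurable borel" using mX0 by simp
  have mY[measurable]: "pY \<in> borel_measurable borel" using mY0 by simp
  have pYpos: "\<And>x. 0 < pY x" and pYD: "\<And>x. pY x \<le> D" using assms(3) by auto
  define Ac where "Ac = {y::real. A \<le> \<bar>y\<bar>}"
  have Ac_meas[measurable]: "Ac \<in> sets borel" unfolding Ac_def by measurable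
  define f where "f x = pX x * ln (pX x / pY x)" for x
  define S where "S = (SUP y\<in>{-A..A}. ennreal (1 / pY y))"
  define B where "B = (\<integral>\<^sup>+ y. ennreal (pY y) * indicator {y. A \<le> \<bar>y\<bar>} y \<partial>lborel) + Lq_pow 1 (\<lambda>x. pX x - pY x)"
  define I where "I = (\<integral>\<^sup>+ x. ennreal (pX x * \<bar>ln (pY x)\<bar> powr s) \<partial>lborel)"
  define L2 where "L2 = Lq_pow 2 (\<lambda>x. pX x - pY x)"
  define H where "H = enn_powr I (1 / s) * enn_powr B (1 - 1 / s)"
  define T1 where "T1 = (\<integral>\<^sup>+x. ennreal (pX x) * indicator Ac x \<partial>lborel)"
  define T2 where "T2 = (\<integral>\<^sup>+x. ennreal (pY x) * indicator Ac x \<partial>lborel)"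
  define T3 where "T3 = (\<integral>\<^sup>+x. ennreal (pX x * \<bar>ln (pY x)\<bar>) * indicator Ac x \<partial>lborel)"
  define T4 where "T4 = (\<integral>\<^sup>+x. ennreal ((pX x - pY x)^2) * indicator Ac x \<partial>lborel)"
  define T5 where "T5 = (\<integral>\<^sup>+x. ennreal ((pX x - pY x)^2 / pY x) * indicator (-Ac) x \<partial>lborel)"
  define G where "G x = ennreal \<bar>ln D\<bar> * (ennreal (pX x) * indicator Ac x) + ennreal (pY x) * indicator Ac x
     + ennreal (pX x * \<bar>ln (pY x)\<bar>) * indicator Ac x + ennreal ((pX x - pY x)^2) * indicator Ac x
     + ennreal ((pX x - pY x)^2 / pY x) * indicator (-Ac) x" for x
  have G_meas[measurable]: "G \<in> borel_measurable borel" unfolding G_def by measurable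

  have pt: "ennreal (f x) + ennreal (pY x) \<le> ennreal (- f x) + ennreal (pX x) + G x" for x
  proof (cases "x \<in> Ac")
    case True
    have r: "f x \<le> (1+\<bar>ln D\<bar>)*pX x + (pX x - pY x)^2 + pX x * \<bar>ln (pY x)\<bar>"
      unfolding f_def by (rule pt_out[OF pX0 pYpos pYD])
    have n1: "0 \<le> \<bar>ln D\<bar> * pX x" "0 \<le> pX x * \<bar>ln (pY x)\<bar>" using pX0[of x] by auto
    have "G x = ennreal (\<bar>ln D\<bar> * pX x + pY x + pX x * \<bar>ln (pY x)\<bar> + (pX x - pY x)^2)"
      using True n1 pX0[of x] pY0[of x] by (simp add: G_def ennreal_plus ennreal_mult)
    moreover have "ennreal (f x) + ennreal (pY x) \<le> ennreal (- f x) + ennreal (pX x)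
        + ennreal (\<bar>ln D\<bar> * pX x + pY x + pX x * \<bar>ln (pY x)\<bar> + (pX x - pY x)^2)"
      using r n1 pX0[of x] pY0[of x] by (intro ennreal_key) (auto simp: algebra_simps)
    ultimately show ?thesis by simp
  next
    case False
    then have xA: "x \<in> {-A..A}" unfolding Ac_def by auto
    have r: "f x \<le> (pX x - pY x)^2 / pY x + (pX x - pY x)"
      unfolding f_def by (rule pt_in[OF pX0 pYpos])
    have "G x = ennreal ((pX x - pY x)^2 / pY x)" using False by (simp add: G_def)
    moreover have "ennreal (f x) + ennreal (pY x) \<le> ennreal (- f x) + ennreal (pX x)
        + ennreal ((pX x - pY x)^2 / pY x)"
      using r pX0[of x] pYpos[of x] by (intro ennreal_key) auto
    ultimately show ?thesis by simp
  qed

  have mfp[measurable]: "(\<lambda>x. ennreal (f x)) \<in> borel_measurable borel" unfolding f_def by measurable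
  have mfn[measurable]: "(\<lambda>x. ennreal (- f x)) \<in> borel_measurable borel" unfolding f_def by measurable
  have mpX: "(\<lambda>x. ennreal (pX x)) \<in> borel_measurable borel" by measurable
  have mpY: "(\<lambda>x. ennreal (pY x)) \<in> borel_measurable borel" by measurable
  have Nfin: "(\<integral>\<^sup>+x. ennreal (- f x) \<partial>lborel) \<le> 1"
  proof -
    have "(\<integral>\<^sup>+x. ennreal (- f x) \<partial>lborel) \<le> (\<integral>\<^sup>+x. ennreal (pY x) \<partial>lborel)"
      unfolding f_def by (intro nn_integral_mono ennreal_leI pt_neg pX0 pYpos)
    then show ?thesis using iY by simp
  qed
  have main: "1 + (\<integral>\<^sup>+x. ennreal (f x) \<partial>lborel) \<le> 1 + ((\<integral>\<^sup>+x. ennreal (- f x) \<partial>lborel) + integral\<^sup>N lborel G)"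
  proof -
    have "1 + (\<integral>\<^sup>+x. ennreal (f x) \<partial>lborel) = (\<integral>\<^sup>+x. ennreal (f x) + ennreal (pY x) \<partial>lborel)"
      using iY by (simp add: nn_integral_add mfp mpY add.commute)
    also have "\<dots> \<le> (\<integral>\<^sup>+x. ennreal (- f x) + ennreal (pX x) + G x \<partial>lborel)"
      by (intro nn_integral_mono pt)
    also have "\<dots> = (\<integral>\<^sup>+x. ennreal (- f x) \<partial>lborel) + 1 + integral\<^sup>N lborel G"
      using iX by (simp add: nn_integral_add mfn mpX G_meas)
    finally show ?thesis by (simp add: algebra_simps)
  qed
  then have P_le: "(\<integral>\<^sup>+x. ennreal (f x) \<partial>lborel) \<le> (\<integral>\<^sup>+x. ennreal (- f x) \<partial>lborel) + integral\<^sup>N lborel G"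
    by (simp add: ennreal_add_left_cancel_le)

  have m1[measurable]: "(\<lambda>x. ennreal (pX x) * indicator Ac x) \<in> borel_measurable borel" by measurable
  have m2[measurable]: "(\<lambda>x. ennreal (pY x) * indicator Ac x) \<in> borel_measurable borel" by measurable
  have m3[measurable]: "(\<lambda>x. ennreal (pX x * \<bar>ln (pY x)\<bar>) * indicator Ac x) \<in> borel_measurable borel" by measurable
  have m4[measurable]: "(\<lambda>x. ennreal ((pX x - pY x)^2) * indicator Ac x) \<in> borel_measurable borel" by measurable
  have m5[measurable]: "(\<lambda>x. ennreal ((pX x - pY x)^2 / pY x) * indicator (-Ac) x) \<in> borel_measurable borel" by measurable
  have m6[measurable]: "(\<lambda>x. ennreal (pX x * \<bar>ln (pY x)\<bar> powr s)) \<in> borel_measurable borel" by measurable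
  have m7[measurable]: "(\<lambda>x. ennreal \<bar>pX x - pY x\<bar>) \<in> borel_measurable borel" by measurable
  have m8[measurable]: "(\<lambda>x. ennreal ((pX x - pY x)^2)) \<in> borel_measurable borel" by measurable

  have G_eq: "integral\<^sup>N lborel G = ennreal \<bar>ln D\<bar> * T1 + T2 + T3 + T4 + T5"
    unfolding G_def T1_def T2_def T3_def T4_def T5_def
    by (simp add: nn_integral_add nn_integral_cmult m1 m2 m3 m4 m5)

  have Lq1: "Lq_pow 1 (\<lambda>x. pX x - pY x) = (\<integral>\<^sup>+x. ennreal \<bar>pX x - pY x\<bar> \<partial>lborel)"
    unfolding Lq_pow_def by simp
  have Lq2: "L2 = (\<integral>\<^sup>+x. ennreal ((pX x - pY x)^2) \<partial>lborel)"
    unfolding L2_def Lq_pow_def by (intro nn_integral_cong) (simp add: powr_numeral)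
  have B_eq: "B = T2 + (\<integral>\<^sup>+x. ennreal \<bar>pX x - pY x\<bar> \<partial>lborel)"
    unfolding B_def T2_def Ac_def Lq1 by simp
  have T1B: "T1 \<le> B"
  proof -
    have "T1 \<le> (\<integral>\<^sup>+x. ennreal (pY x) * indicator Ac x + ennreal \<bar>pX x - pY x\<bar> \<partial>lborel)"
      unfolding T1_def
    proof (intro nn_integral_mono)
      fix x
      show "ennreal (pX x) * indicator Ac x \<le> ennreal (pY x) * indicator Ac x + ennreal \<bar>pX x - pY x\<bar>"
      proof (cases "x \<in> Ac")
        case True
        have "ennreal (pX x) \<le> ennreal (pY x + \<bar>pX x - pY x\<bar>)" by (intro ennreal_leI) linarith
        then show ?thesis using True pY0[of x] by (simp add: ennreal_plus)
      qed simp
    qed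
    also have "\<dots> = B" unfolding B_eq T2_def by (simp add: nn_integral_add m2 m7)
    finally show ?thesis .
  qed
  have T2B: "T2 \<le> B" unfolding B_eq by simp
  have T4L: "T4 \<le> L2" unfolding T4_def Lq2
    by (intro nn_integral_mono) (auto simp: indicator_def)
  have T5L: "T5 \<le> S * L2"
  proof -
    have "T5 \<le> (\<integral>\<^sup>+x. S * ennreal ((pX x - pY x)^2) \<partial>lborel)"
      unfolding T5_def
    proof (intro nn_integral_mono)
      fix x
      show "ennreal ((pX x - pY x)^2 / pY x) * indicator (-Ac) x \<le> S * ennreal ((pX x - pY x)^2)"
      proof (cases "x \<in> Ac")
        case False
        then have xA: "x \<in> {-A..A}" unfolding Ac_def by auto
        have "ennreal ((pX x - pY x)^2 / pY x) = ennreal (1 / pY x) * ennreal ((pX x - pY x)^2)"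
          using pYpos[of x] by (simp add: ennreal_mult[symmetric])
        also have "\<dots> \<le> S * ennreal ((pX x - pY x)^2)"
          unfolding S_def by (intro mult_right_mono SUP_upper xA) simp
        finally show ?thesis using False by simp
      qed simp
    qed
    also have "\<dots> = S * L2" unfolding Lq2 by (simp add: nn_integral_cmult m8)
    finally show ?thesis .
  qed

  have T3H: "T3 \<le> H"
  proof -
    consider "I = 0" | "B = 0" | "I \<noteq> 0" "B \<noteq> 0" "I = \<infinity> \<or> B = \<infinity>"
      | "I \<noteq> 0" "B \<noteq> 0" "I \<noteq> \<infinity>" "B \<noteq> \<infinity>" by blast
    then show ?thesis
    proof cases
      case 1
      have "AE x in lborel. ennreal (pX x * \<bar>ln (pY x)\<bar> powr s) = 0"
        using 1 unfolding I_def by (subst (asm) nn_integral_0_iff_AE) (auto simp: m6)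
      then have "AE x in lborel. ennreal (pX x * \<bar>ln (pY x)\<bar>) * indicator Ac x = 0"
      proof eventually_elim
        case (elim x)
        then have "pX x * \<bar>ln (pY x)\<bar> \<le> 0"
          using aux_zero[OF pX0[of x]] by (simp add: ennreal_eq_0_iff)
        then show ?case by (simp add: ennreal_eq_0_iff)
      qed
      then have "T3 = 0" unfolding T3_def by (subst nn_integral_0_iff_AE) (auto simp: m3)
      then show ?thesis by simp
    next
      case 2
      then have "T1 = 0" using T1B by simp
      then have "AE x in lborel. ennreal (pX x) * indicator Ac x = 0"
        unfolding T1_def by (subst (asm) nn_integral_0_iff_AE) (auto simp: m1)
      then have "AE x in lborel. ennreal (pX x * \<bar>ln (pY x)\<bar>) * indicator Ac x = 0"
      proof eventually_elim
        case (elim x)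
        then show ?case using pX0[of x] by (cases "x \<in> Ac") (auto simp: ennreal_eq_0_iff)
      qed
      then have "T3 = 0" unfolding T3_def by (subst nn_integral_0_iff_AE) (auto simp: m3)
      then show ?thesis by simp
    next
      case 3
      have nz: "enn_powr I (1/s) \<noteq> 0" "enn_powr B (1 - 1/s) \<noteq> 0"
        using 3 enn_powr_nz by auto
      have "H = \<infinity>"
      proof (cases "I = \<infinity>")
        case True
        then have "H = top * enn_powr B (1 - 1/s)" by (simp add: H_def enn_powr_def)
        then show ?thesis using ennreal_top_mult_right[OF nz(2)] by simp
      next
        case False
        then have "B = \<infinity>" using 3 by simp
        then have "H = enn_powr I (1/s) * top" by (simp add: H_def enn_powr_def)
        then show ?thesis using ennreal_top_mult_right[OF nz(1)] by (simp add: mult.commute)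
      qed
      then show ?thesis by simp
    next
      case 4
      define Ir where "Ir = enn2real I"
      define Br where "Br = enn2real B"
      have Ir: "I = ennreal Ir" "Ir > 0" using 4 unfolding Ir_def
        by (cases I; simp)+
      have Br: "B = ennreal Br" "Br > 0" using 4 unfolding Br_def
        by (cases B; simp)+
      define K where "K = Ir powr (1/s) * Br powr (1-1/s)"
      have K0: "K \<ge> 0" unfolding K_def by simp
      have s0: "s > 0" using assms(5) by simp
      have HK: "H = ennreal K" unfolding H_def enn_powr_def K_def using Ir Br
        by (simp add: ennreal_mult)
      have c1: "K/(s*Ir) \<ge> 0" "K*(1-1/s)/Br \<ge> 0" using K0 Ir Br s0 assms(5) by auto
      have pw: "ennreal (pX x * \<bar>ln (pY x)\<bar>) * indicator Ac x \<le> ennreal (K/(s*Ir)) * ennreal (pX x * \<bar>ln (pY x)\<bar> powr s)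
          + ennreal (K*(1-1/s)/Br) * (ennreal (pX x) * indicator Ac x)" for x
      proof (cases "x \<in> Ac")
        case True
        have y: "\<bar>ln (pY x)\<bar> \<le> K * (\<bar>ln (pY x)\<bar> powr s/(s*Ir) + (1-1/s)/Br)"
          using young_pt[of "\<bar>ln (pY x)\<bar>" Ir Br s] Ir Br assms(5) by (simp add: K_def)
        then have "pX x * \<bar>ln (pY x)\<bar> \<le> pX x * (K * (\<bar>ln (pY x)\<bar> powr s/(s*Ir) + (1-1/s)/Br))"
          using pX0[of x] by (intro mult_left_mono) auto
        also have "\<dots> = K/(s*Ir) * (pX x * \<bar>ln (pY x)\<bar> powr s) + K*(1-1/s)/Br * pX x"
          using Ir Br s0 by (simp add: field_simps)
        finally have r: "ennreal (pX x * \<bar>ln (pY x)\<bar>) \<le> ennreal (K/(s*Ir) * (pX x * \<bar>ln (pY x)\<bar> powr s) + K*(1-1/s)/Br * pX x)"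
          by (rule ennreal_leI)
        have "ennreal (K/(s*Ir) * (pX x * \<bar>ln (pY x)\<bar> powr s) + K*(1-1/s)/Br * pX x)
           = ennreal (K/(s*Ir)) * ennreal (pX x * \<bar>ln (pY x)\<bar> powr s) + ennreal (K*(1-1/s)/Br) * ennreal (pX x)"
        proof -
          have nn: "0 \<le> pX x * \<bar>ln (pY x)\<bar> powr s" using pX0[of x] by simp
          have a: "0 \<le> K/(s*Ir) * (pX x * \<bar>ln (pY x)\<bar> powr s)" using c1(1) nn by (rule mult_nonneg_nonneg)
          have b: "0 \<le> K*(1-1/s)/Br * pX x" using c1(2) pX0[of x] by (rule mult_nonneg_nonneg)
          show ?thesis
            by (simp only: ennreal_plus[OF a b] ennreal_mult[OF c1(1) nn] ennreal_mult[OF c1(2) pX0[of x]])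
        qed
        then show ?thesis using r True by simp
      qed simp
      have "T3 \<le> (\<integral>\<^sup>+x. ennreal (K/(s*Ir)) * ennreal (pX x * \<bar>ln (pY x)\<bar> powr s)
          + ennreal (K*(1-1/s)/Br) * (ennreal (pX x) * indicator Ac x) \<partial>lborel)"
        unfolding T3_def by (intro nn_integral_mono pw)
      also have "\<dots> = ennreal (K/(s*Ir)) * I + ennreal (K*(1-1/s)/Br) * T1"
        unfolding I_def T1_def by (simp add: nn_integral_add nn_integral_cmult m1 m6)
      also have "\<dots> \<le> ennreal (K/(s*Ir)) * ennreal Ir + ennreal (K*(1-1/s)/Br) * ennreal Br"
        using T1B Ir Br by (intro add_mono mult_left_mono) auto
      also have "\<dots> = ennreal (K/(s*Ir) * Ir + K*(1-1/s)/Br * Br)"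
      proof -
        have a: "0 \<le> K/(s*Ir) * Ir" using c1(1) Ir(2) by (intro mult_nonneg_nonneg) auto
        have b: "0 \<le> K*(1-1/s)/Br * Br" using c1(2) Br(2) by (intro mult_nonneg_nonneg) auto
        show ?thesis
          by (simp only: ennreal_plus[OF a b] ennreal_mult[OF c1(1) less_imp_le[OF Ir(2)]]
              ennreal_mult[OF c1(2) less_imp_le[OF Br(2)]])
      qed
      also have "K/(s*Ir) * Ir + K*(1-1/s)/Br * Br = K"
        using Ir Br s0 by (simp add: field_simps)
      finally show ?thesis using HK by simp
    qed
  qed

  have GB: "integral\<^sup>N lborel G \<le> (1 + ennreal \<bar>ln D\<bar>) * B + H + (1 + S) * L2"
  proof -
    have "integral\<^sup>N lborel G \<le> ennreal \<bar>ln D\<bar> * B + B + H + L2 + S * L2"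
      unfolding G_eq using T1B T2B T3H T4L T5L
      by (intro add_mono mult_left_mono) auto
    also have "\<dots> = (1 + ennreal \<bar>ln D\<bar>) * B + H + (1 + S) * L2"
      by (simp add: algebra_simps)
    finally show ?thesis .
  qed
  have "KL pX pY \<le> enn2ereal (integral\<^sup>N lborel G)"
  proof -
    have "(\<integral>\<^sup>+x. ennreal (- f x) \<partial>lborel) \<noteq> \<infinity>"
    proof
      assume "(\<integral>\<^sup>+x. ennreal (- f x) \<partial>lborel) = \<infinity>"
      then show False using Nfin by (simp add: top_unique)
    qed
    then show ?thesis using ereal_step[OF P_le] unfolding KL_def f_def by simp
  qed
  also have "\<dots> \<le> enn2ereal ((1 + ennreal \<bar>ln D\<bar>) * B + H + (1 + S) * L2)"
    using GB by (simp add: less_eq_ennreal.rep_eq[symmetric])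
  finally show ?thesis unfolding Let_def B_def H_def I_def S_def L2_def by simp
qed
end
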